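(* Let $A\in\mathcal{PM}(n)$. If the poset vectors of $A$ have pairwise distinct support sizes (i.e., $|\mathrm{supp}(v)|\ne|\mathrm{supp}(w)|$ for all distinct poset vectors $v,w$ of $A$), then $\mathrm{Aut}(A)=\{Q\in\mathfrak P_n: Q^TAQ=A\}$ is trivial, i.e., equals $\{I_n\}$.
   Context: Let $X_n=\{0,1,\ldots,n-1\}$. A naturally labeled (NL) poset on $X_n$ is a partial order $\preceq$ on $X_n$ such that $x\preceq y$ implies $x\le y$ in the usual integer order. Its poset matrix is the $n\times n$ $(0,1)$-matrix $A=(a_{i,j})_{i,j\in X_n}$ with $a_{i,j}=1$ if $j\preceq i$ and $0$ otherwise; $\mathcal{PM}(n)$ is the set of all such matrices. For a row vector $v\in\{0,1\}^n$, $A^v=\begin{bmatrix}A&\mathbf{0}\\ v&1\end{bmatrix}$, and $v$ is a poset vector of $A$ if $A^v\in\mathcal{PM}(n+1)$. $\mathrm{supp}(v)=\{j: v_j=1\}$. $\mathfrak P_n$ is the group of $n\times n$ permutation matrices. *)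

theory Defs
  imports "Jordan_Normal_Form.Matrix"
begin

text \<open>Poset matrices of naturally labeled posets on X_n = {0..<n}:
  a_{i,j} = 1 iff j precedes-or-equals i.  Entries are integers in {0,1}.\<close>

definition poset_matrix :: "nat \<Rightarrow> int mat \<Rightarrow> bool" where
  "poset_matrix n A \<longleftrightarrow>
     A \<in> carrier_mat n n \<and>
     (\<forall>i<n. \<forall>j<n. A $$ (i,j) \<in> {0,1}) \<and>
     (\<forall>i<n. A $$ (i,i) = 1) \<and>
     (\<forall>i<n. \<forall>j<n. A $$ (i,j) = 1 \<and> A $$ (j,i) = 1 \<longrightarrow> i = j) \<and>
     (\<forall>i<n. \<forall>j<n. \<forall>k<n. A $$ (i,j) = 1 \<and> A $$ (j,k) = 1 \<longrightarrow> A $$ (i,k) = 1) \<and>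
     (\<forall>i<n. \<forall>j<n. A $$ (i,j) = 1 \<longrightarrow> j \<le> i)"

text \<open>The extended matrix A^v = [A 0; v 1].\<close>
definition ext_mat :: "int mat \<Rightarrow> int vec \<Rightarrow> int mat" where
  "ext_mat A v = mat (dim_row A + 1) (dim_row A + 1)
     (\<lambda>(i,j). if i < dim_row A \<and> j < dim_row A then A $$ (i,j)
              else if i < dim_row A then 0
              else if j < dim_row A then v $ j
              else 1)"

definition poset_vector :: "int mat \<Rightarrow> int vec \<Rightarrow> bool" where
  "poset_vector A v \<longleftrightarrow>
     dim_vec v = dim_row A \<and> (\<forall>j<dim_vec v. v $ j \<in> {0,1}) \<and>
     poset_matrix (dim_row A + 1) (ext_mat A v)"

definition supp :: "int vec \<Rightarrow> nat set" where
  "supp v = {j. j < dim_vec v \<and> v $ j = 1}"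

definition perm_matrix :: "nat \<Rightarrow> int mat \<Rightarrow> bool" where
  "perm_matrix n Q \<longleftrightarrow>
     Q \<in> carrier_mat n n \<and>
     (\<forall>i<n. \<forall>j<n. Q $$ (i,j) \<in> {0,1}) \<and>
     (\<forall>i<n. \<exists>!j. j < n \<and> Q $$ (i,j) = 1) \<and>
     (\<forall>j<n. \<exists>!i. i < n \<and> Q $$ (i,j) = 1)"

definition Aut :: "nat \<Rightarrow> int mat \<Rightarrow> int mat set" where
  "Aut n A = {Q. perm_matrix n Q \<and> transpose_mat Q * A * Q = A}"

end

theory Submission
  imports Defs
begin

lemma poset_matrixD:
  assumes H: "poset_matrix n A"
  shows "A \<in> carrier_mat n n"
     "\<forall>i<n. \<forall>j<n. A $$ (i,j) \<in> {0,1}" "\<forall>i<n. A $$ (i,i) = 1"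
     "\<forall>i<n. \<forall>j<n. A $$ (i,j) = 1 \<and> A $$ (j,i) = 1 \<longrightarrow> i = j"
     "\<forall>i<n. \<forall>j<n. \<forall>k<n. A $$ (i,j) = 1 \<and> A $$ (j,k) = 1 \<longrightarrow> A $$ (i,k) = 1"
     "\<forall>i<n. \<forall>j<n. A $$ (i,j) = 1 \<longrightarrow> j \<le> i"
proof -
  note h = H[unfolded poset_matrix_def]
  show "A \<in> carrier_mat n n" by (rule conjunct1[OF h])
  show "\<forall>i<n. \<forall>j<n. A $$ (i,j) \<in> {0,1}" by (rule conjunct1[OF conjunct2[OF h]])
  show "\<forall>i<n. A $$ (i,i) = 1" by (rule conjunct1[OF conjunct2[OF conjunct2[OF h]]])
  show "\<forall>i<n. \<forall>j<n. A $$ (i,j) = 1 \<and> A $$ (j,i) = 1 \<longrightarrow> i = j"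
    by (rule conjunct1[OF conjunct2[OF conjunct2[OF conjunct2[OF h]]]])
  show "\<forall>i<n. \<forall>j<n. \<forall>k<n. A $$ (i,j) = 1 \<and> A $$ (j,k) = 1 \<longrightarrow> A $$ (i,k) = 1"
    by (rule conjunct1[OF conjunct2[OF conjunct2[OF conjunct2[OF conjunct2[OF h]]]]])
  show "\<forall>i<n. \<forall>j<n. A $$ (i,j) = 1 \<longrightarrow> j \<le> i"
    by (rule conjunct2[OF conjunct2[OF conjunct2[OF conjunct2[OF conjunct2[OF h]]]]])
qed

lemma downset_vec:
  assumes PM: "poset_matrix n A"
    and S: "S \<subseteq> {..<n}"
    and dc: "\<And>y z. y \<in> S \<Longrightarrow> z < n \<Longrightarrow> A $$ (y,z) = 1 \<Longrightarrow> z \<in> S"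
  shows "poset_vector A (vec n (\<lambda>j. if j \<in> S then 1 else 0)) \<and>
         supp (vec n (\<lambda>j. if j \<in> S then 1 else 0)) = S"
proof -
  let ?v = "vec n (\<lambda>j. if j \<in> S then 1 else (0::int))"
  have AC0: "A \<in> carrier_mat n n" by (rule poset_matrixD(1)[OF PM])
  have dA: "dim_row A = n" "dim_col A = n" using AC0 by auto
  let ?E = "ext_mat A ?v"
  have E: "?E $$ (i,j) =
     (if i < n \<and> j < n then A $$ (i,j) else if i < n then 0
      else if j < n then (if j \<in> S then 1 else 0) else 1)" if "i < n+1" "j < n+1" for i j
  proof -
    have "?E $$ (i,j) = (\<lambda>(i,j). if i < dim_row A \<and> j < dim_row A then A $$ (i,j)
              else if i < dim_row A then 0
              else if j < dim_row A then ?v $ j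
              else 1) (i,j)"
      unfolding ext_mat_def by (rule index_mat(1)) (use that dA in auto)
    also have "\<dots> = (if i < n \<and> j < n then A $$ (i,j) else if i < n then 0
      else if j < n then (if j \<in> S then 1 else 0) else 1)"
      unfolding dA(1) by simp
    finally show ?thesis .
  qed
  note P = poset_matrixD(2-6)[OF PM]
  have c1: "?E \<in> carrier_mat (n+1) (n+1)" unfolding ext_mat_def dA(1) by simp
  have E1: "\<And>i j. i < n \<Longrightarrow> j < n \<Longrightarrow> ?E $$ (i,j) = A $$ (i,j)" using E by simp
  have E2: "\<And>i. i < n \<Longrightarrow> ?E $$ (i,n) = 0" using E by simp
  have E3: "\<And>j. j < n \<Longrightarrow> ?E $$ (n,j) = (if j \<in> S then 1 else 0)" using E by simp
  have E4: "?E $$ (n,n) = 1" using E by simp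
  have sp: "\<And>i. i < n+1 \<Longrightarrow> i < n \<or> i = n" by auto
  have c2: "\<forall>i<n+1. \<forall>j<n+1. ?E $$ (i,j) \<in> {0,1}"
  proof (intro allI impI)
    fix i j assume "i < n+1" "j < n+1"
    then consider "i<n" "j<n" | "i<n" "j=n" | "i=n" "j<n" | "i=n" "j=n" using sp by blast
    then show "?E $$ (i,j) \<in> {0,1}" using P(1) E1 E2 E3 E4 by cases auto
  qed
  have c3: "\<forall>i<n+1. ?E $$ (i,i) = 1"
  proof (intro allI impI)
    fix i assume "i < n+1"
    then consider "i<n" | "i=n" using sp by blast
    then show "?E $$ (i,i) = 1" using P(2) E1 E4 by cases auto
  qed
  have c4: "\<forall>i<n+1. \<forall>j<n+1. ?E $$ (i,j) = 1 \<and> ?E $$ (j,i) = 1 \<longrightarrow> i = j"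
  proof (intro allI impI)
    fix i j assume "i < n+1" "j < n+1" and h: "?E $$ (i,j) = 1 \<and> ?E $$ (j,i) = 1"
    then consider "i<n" "j<n" | "i<n" "j=n" | "i=n" "j<n" | "i=n" "j=n" using sp by blast
    then show "i = j"
    proof cases
      case 1
      then have "A $$ (i,j) = 1" "A $$ (j,i) = 1" using h E1 by auto
      then show ?thesis using P(3) 1 by blast
    next
      case 2 then show ?thesis using h E2 by auto
    next
      case 3 then show ?thesis using h E2 by auto
    qed simp
  qed
  have c5: "\<forall>i<n+1. \<forall>j<n+1. \<forall>k<n+1. ?E $$ (i,j) = 1 \<and> ?E $$ (j,k) = 1 \<longrightarrow> ?E $$ (i,k) = 1"
  proof (intro allI impI)
    fix i j k assume hi: "i < n+1" "j<n+1" "k<n+1" and h: "?E $$ (i,j) = 1 \<and> ?E $$ (j,k) = 1"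
    show "?E $$ (i,k) = 1"
    proof (cases "i < n")
      case True
      have "j \<noteq> n" using h E2 True by auto
      then have j: "j < n" using hi sp by blast
      have "k \<noteq> n" using h E2 j by auto
      then have k: "k < n" using hi sp by blast
      have "A $$ (i,j) = 1" "A $$ (j,k) = 1" using h True j k E1 by auto
      then have "A $$ (i,k) = 1" using P(4) True j k by blast
      then show ?thesis using True k E1 by simp
    next
      case False
      then have i: "i = n" using hi sp by blast
      show ?thesis
      proof (cases "j < n")
        case True
        have "k \<noteq> n" using h E2 True by auto
        then have k: "k < n" using hi sp by blast
        have "j \<in> S" using h i True E3 by (auto split: if_splits)
        moreover have "A $$ (j,k) = 1" using h True k E1 by auto
        ultimately have "k \<in> S" using dc k by blast
        then show ?thesis using i k E3 by simp
      next
        case False2: False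
        then have "j = n" using hi sp by blast
        then show ?thesis using h i by simp
      qed
    qed
  qed
  have c6: "\<forall>i<n+1. \<forall>j<n+1. ?E $$ (i,j) = 1 \<longrightarrow> j \<le> i"
  proof (intro allI impI)
    fix i j assume "i < n+1" "j < n+1" and h: "?E $$ (i,j) = 1"
    then consider "i<n" "j<n" | "i<n" "j=n" | "i=n" "j<n" | "i=n" "j=n" using sp by blast
    then show "j \<le> i" using h P(5) E1 E2 by cases auto
  qed
  have pm: "poset_matrix (n+1) ?E" unfolding poset_matrix_def
    by (intro conjI c1 c2 c3 c4 c5 c6)
  have v1: "dim_vec ?v = dim_row A" using dA by simp
  have v2: "\<forall>j<dim_vec ?v. ?v $ j \<in> {0,1}" by simp
  have pm': "poset_matrix (dim_row A + 1) ?E" using pm unfolding dA(1) .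
  have "poset_vector A ?v" unfolding poset_vector_def
    by (intro conjI v1 v2 pm')
  moreover have "supp ?v = S"
  proof -
    have "x \<in> supp ?v \<longleftrightarrow> x \<in> S" for x
    proof (cases "x < n")
      case True
      then show ?thesis unfolding supp_def by simp
    next
      case False
      then show ?thesis unfolding supp_def using S by auto
    qed
    then show ?thesis by blast
  qed
  ultimately show ?thesis by blast
qed

lemma sum_single:
  fixes f :: "nat \<Rightarrow> int"
  assumes "a < n" "\<And>k. k < n \<Longrightarrow> k \<noteq> a \<Longrightarrow> f k = 0"
  shows "(\<Sum>k\<in>{0..<n}. f k) = f a"
proof -
  have "(\<Sum>k\<in>{0..<n}. f k) = f a + (\<Sum>k\<in>{0..<n} - {a}. f k)"
    using assms(1) by (simp add: sum.remove)
  also have "(\<Sum>k\<in>{0..<n} - {a}. f k) = 0" using assms(2) by (intro sum.neutral) auto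
  finally show ?thesis by simp
qed

lemma mult_entry:
  fixes B C :: "int mat"
  assumes "B \<in> carrier_mat n n" "C \<in> carrier_mat n n" "i < n" "j < n"
  shows "(B * C) $$ (i,j) = (\<Sum>l\<in>{0..<n}. B $$ (i,l) * C $$ (l,j))"
  using assms by (simp add: scalar_prod_def)

lemma uniq1: "\<exists>!x. P x \<Longrightarrow> P a \<Longrightarrow> P b \<Longrightarrow> a = b" by blast

theorem theorem3p5:
  fixes n :: nat and A :: "int mat"
  assumes "poset_matrix n A"
    and "\<forall>v w. poset_vector A v \<and> poset_vector A w \<and> v \<noteq> w
               \<longrightarrow> card (supp v) \<noteq> card (supp w)"
  shows "Aut n A = {1\<^sub>m n}"
proof
  have AC: "A \<in> carrier_mat n n" by (rule poset_matrixD(1)[OF assms(1)])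
  have I1: "perm_matrix n (1\<^sub>m n)"
  proof -
    have r: "\<forall>i<n. \<exists>!j. j < n \<and> 1\<^sub>m n $$ (i,j) = (1::int)"
    proof (intro allI impI)
      fix i assume "i < n"
      then show "\<exists>!j. j < n \<and> 1\<^sub>m n $$ (i,j) = (1::int)"
        by (intro ex1I[of _ i]) (auto split: if_splits)
    qed
    have c: "\<forall>j<n. \<exists>!i. i < n \<and> 1\<^sub>m n $$ (i,j) = (1::int)"
    proof (intro allI impI)
      fix j assume "j < n"
      then show "\<exists>!i. i < n \<and> 1\<^sub>m n $$ (i,j) = (1::int)"
        by (intro ex1I[of _ j]) (auto split: if_splits)
    qed
    have "\<forall>i<n. \<forall>j<n. 1\<^sub>m n $$ (i,j) \<in> {0,(1::int)}" by simp
    then show ?thesis unfolding perm_matrix_def by (intro conjI one_carrier_mat r c)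
  qed
  have I2: "transpose_mat (1\<^sub>m n) * A * 1\<^sub>m n = A"
    using AC by (simp add: transpose_one)
  show "{1\<^sub>m n} \<subseteq> Aut n A"
    unfolding Aut_def using I1 I2 by simp
  show "Aut n A \<subseteq> {1\<^sub>m n}"
  proof
    fix Q assume "Q \<in> Aut n A"
    then have PQ: "perm_matrix n Q" and EQ: "transpose_mat Q * A * Q = A" unfolding Aut_def by simp_all
    note h = PQ[unfolded perm_matrix_def]
    have QC: "Q \<in> carrier_mat n n" by (rule conjunct1[OF h])
    have Q01: "\<forall>i<n. \<forall>j<n. Q $$ (i,j) \<in> {0,1}" by (rule conjunct1[OF conjunct2[OF h]])
    have Qr: "\<forall>i<n. \<exists>!j. j < n \<and> Q $$ (i,j) = 1" by (rule conjunct1[OF conjunct2[OF conjunct2[OF h]]])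
    have Qc: "\<forall>j<n. \<exists>!i. i < n \<and> Q $$ (i,j) = 1" by (rule conjunct2[OF conjunct2[OF conjunct2[OF h]]])
    define p where "p j = (THE i. i < n \<and> Q $$ (i,j) = 1)" for j
    have p: "p j < n \<and> Q $$ (p j, j) = 1" if "j < n" for j
      unfolding p_def by (rule theI') (rule Qc[rule_format, OF that])
    have p0: "Q $$ (k,j) = 0" if h: "j < n" "k < n" "k \<noteq> p j" for k j
    proof -
      have "Q $$ (k,j) \<noteq> 1"
      proof
        assume "Q $$ (k,j) = 1"
        then have "k = p j" using uniq1[OF Qc[rule_format, OF h(1)]] p[OF h(1)] h(2) by blast
        then show False using h(3) by simp
      qed
      moreover have "Q $$ (k,j) \<in> {0,1}" using Q01 h by blast
      ultimately show "Q $$ (k,j) = 0" by simp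
    qed
    have TA: "(transpose_mat Q * A) $$ (i,l) = A $$ (p i, l)" if "i < n" "l < n" for i l
    proof -
      have "(transpose_mat Q * A) $$ (i,l) = (\<Sum>k\<in>{0..<n}. transpose_mat Q $$ (i,k) * A $$ (k,l))"
        using that QC AC by (intro mult_entry) auto
      also have "\<dots> = (\<Sum>k\<in>{0..<n}. Q $$ (k,i) * A $$ (k,l))"
        using that QC by (intro sum.cong) auto
      also have "\<dots> = Q $$ (p i,i) * A $$ (p i,l)"
        using p0 p that by (intro sum_single) auto
      finally show ?thesis using p that by simp
    qed
    have M: "A $$ (p i, p j) = A $$ (i,j)" if "i < n" "j < n" for i j
    proof -
      have "(transpose_mat Q * A * Q) $$ (i,j) = (\<Sum>l\<in>{0..<n}. (transpose_mat Q * A) $$ (i,l) * Q $$ (l,j))"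
        using that QC AC by (intro mult_entry) auto
      also have "\<dots> = (transpose_mat Q * A) $$ (i,p j) * Q $$ (p j,j)"
        using p0 p that by (intro sum_single) auto
      also have "\<dots> = A $$ (p i, p j)" using TA p that by simp
      finally show ?thesis using EQ by simp
    qed
    have inj: "inj_on p {..<n}"
    proof (rule inj_onI)
      fix i j assume h: "i \<in> {..<n}" "j \<in> {..<n}" "p i = p j"
      then show "i = j" using Qr p[of i] p[of j] by auto
    qed
    have surj: "p ` {..<n} = {..<n}"
      using inj p by (intro endo_inj_surj) auto
    note P = poset_matrixD(3-5)[OF assms(1)]
    define D where "D x = {y. y < n \<and> A $$ (x,y) = 1}" for x
    have Dv: "poset_vector A (vec n (\<lambda>j. if j \<in> D x then 1 else 0)) \<and>
         supp (vec n (\<lambda>j. if j \<in> D x then 1 else 0)) = D x" if "x < n" for x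
    proof (rule downset_vec[OF assms(1)])
      show "D x \<subseteq> {..<n}" by (auto simp: D_def)
      fix y z assume h: "y \<in> D x" "z < n" "A $$ (y, z) = 1"
      then have "y < n" "A $$ (x,y) = 1" by (auto simp: D_def)
      then have "A $$ (x,z) = 1" using P(3) that h(2,3) by blast
      then show "z \<in> D x" using h(2) by (simp add: D_def)
    qed
    have pfix: "p x = x" if x: "x < n" for x
    proof -
      have px: "p x < n" using p x by auto
      have img: "D (p x) = p ` D x"
      proof
        show "D (p x) \<subseteq> p ` D x"
        proof
          fix y assume "y \<in> D (p x)"
          then have y: "y < n" "A $$ (p x, y) = 1" by (auto simp: D_def)
          then obtain z where z: "z < n" "y = p z" using surj by (metis imageE lessThan_iff)
          then show "y \<in> p ` D x" using y M[OF x z(1)] by (auto simp: D_def)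
        qed
        show "p ` D x \<subseteq> D (p x)" using M x p by (auto simp: D_def)
      qed
      have "card (D (p x)) = card (D x)"
        unfolding img by (rule card_image, rule inj_on_subset[OF inj]) (auto simp: D_def)
      then have "D (p x) = D x"
      proof -
        assume c: "card (D (p x)) = card (D x)"
        let ?u = "vec n (\<lambda>j. if j \<in> D x then 1 else (0::int))"
        let ?w = "vec n (\<lambda>j. if j \<in> D (p x) then 1 else (0::int))"
        have "card (supp ?w) = card (supp ?u)" using c Dv[OF x] Dv[OF px] by simp
        then have "?w = ?u" using assms(2) Dv[OF x] Dv[OF px] by blast
        then have "supp ?w = supp ?u" by simp
        then show ?thesis using Dv[OF x] Dv[OF px] by simp
      qed
      then have "A $$ (x, p x) = 1" "A $$ (p x, x) = 1"
        using P(1) x px by (auto simp: D_def)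
      then show ?thesis using P(2) x px by blast
    qed
    show "Q \<in> {1\<^sub>m n}"
    proof -
      have "Q = 1\<^sub>m n"
      proof (rule eq_matI)
        fix i j assume "i < dim_row (1\<^sub>m n)" "j < dim_col (1\<^sub>m n)"
        then have h: "i < n" "j < n" by auto
        show "Q $$ (i,j) = 1\<^sub>m n $$ (i,j)"
          using p[OF h(2)] p0[OF h(2) h(1)] pfix[OF h(2)] h by auto
      qed (use QC in auto)
      then show ?thesis by simp
    qed
  qed
qed

end
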